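(* Let $G$ be a finite solvable group and $M$ a maximal subgroup of $G$. If $M$ is exponential in $G$, then $M \lhd G$.
   Context: A subgroup $H$ of finite index in a group $G$ is called exponential in $G$ if $x^{|G:H|} \in H$ for every $x \in G$. *)

theory Defs
  imports "HOL-Algebra.Algebra"
begin

definition maximal_subgroup :: "('a, 'b) monoid_scheme \<Rightarrow> 'a set \<Rightarrow> bool" where
  "maximal_subgroup G M \<longleftrightarrow> subgroup M G \<and> M \<noteq> carrier G \<and>
     (\<forall>H. subgroup H G \<and> M \<subseteq> H \<longrightarrow> H = M \<or> H = carrier G)"

definition exponential_subgroup :: "('a, 'b) monoid_scheme \<Rightarrow> 'a set \<Rightarrow> bool" where
  "exponential_subgroup G H \<longleftrightarrow> subgroup H G \<and> finite (rcosets\<^bsub>G\<^esub> H) \<and>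
     (\<forall>x\<in>carrier G. x [^]\<^bsub>G\<^esub> card (rcosets\<^bsub>G\<^esub> H) \<in> H)"

end

theory Submission
  imports Defs
begin


lemma (in group) rcosets_consistent:
  "(\<lambda>a. H #>\<^bsub>G\<lparr>carrier := K\<rparr>\<^esub> a) = (\<lambda>a. H #> a)"
  by (auto simp: r_coset_def)

lemma (in group) rcosets_image: "rcosets H = (\<lambda>a. H #> a) ` carrier G"
  by (auto simp: RCOSETS_def)

lemma (in group) subgroup_pow_closed:
  assumes "subgroup H G" "x \<in> H" shows "x [^] (n::nat) \<in> H"
proof (induction n)
  case 0 then show ?case using assms subgroup.one_closed by fastforce
next
  case (Suc n)
  have "x \<in> carrier G" using assms subgroup.subset by blast
  then show ?case using Suc assms subgroup.m_closed by fastforce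
qed

lemma (in group) exists_q_elem:
  assumes fin: "finite (carrier G)" and K: "subgroup K G" and H: "subgroup H G" and HK: "H \<subseteq> K"
    and q: "Factorial_Ring.prime q" and qd: "q dvd card ((\<lambda>a. H #> a) ` K)"
  shows "\<exists>x\<in>K. x \<notin> H \<and> x [^] q \<in> H"
proof -
  interpret K': group "G\<lparr>carrier := K\<rparr>" using K by (rule subgroup_imp_group)
  have finK: "finite K" using fin K by (meson finite_subset subgroup.subset)
  have HK': "subgroup H (G\<lparr>carrier := K\<rparr>)" using subgroup_incl[OF H K HK] .
  have lag: "card ((\<lambda>a. H #> a) ` K) * card H = card K"
    using K'.lagrange[OF HK'] K'.rcosets_image[of H] by (simp add: order_def rcosets_consistent)
  define e where "e = multiplicity q (card K)"
  obtain r where r: "card K = q ^ e * r" "\<not> q dvd r"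
  proof -
    have cK: "card K \<noteq> 0" using finK subgroup.one_closed[OF K] by (metis card_0_eq empty_iff)
    show ?thesis using multiplicity_decompose'[of "card K" q] cK q not_prime_unit that unfolding e_def by blast
  qed
  have ord: "order (G\<lparr>carrier := K\<rparr>) = q^e * r" using r(1) by (simp add: order_def)
  have finK': "finite (carrier (G\<lparr>carrier := K\<rparr>))" using finK by simp
  obtain Q where Q: "subgroup Q (G\<lparr>carrier := K\<rparr>)" "card Q = q ^ e"
    using sylow_thm[OF q K'.is_group ord finK'] by blast
  have QK: "Q \<subseteq> K" using Q(1) subgroup.subset by fastforce
  have QG: "subgroup Q G"
    using Q(1) K incl_subgroup by blast
  have finQ: "finite Q" using finK QK finite_subset by blast
  have "\<not> Q \<subseteq> H"
  proof
    assume QH: "Q \<subseteq> H"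
    interpret H': group "G\<lparr>carrier := H\<rparr>" using H by (rule subgroup_imp_group)
    have QH': "subgroup Q (G\<lparr>carrier := H\<rparr>)" using subgroup_incl[OF QG H QH] .
    have "card Q dvd card H"
    proof -
      have "card (rcosets\<^bsub>G\<lparr>carrier:=H\<rparr>\<^esub> Q) * card Q = card H"
        using H'.lagrange[OF QH'] by (simp add: order_def)
      then show ?thesis by (metis dvd_triv_right)
    qed
    then obtain s where s: "card H = q^e * s" using Q(2) by auto
    have "q^e * r = q^e * s * card ((\<lambda>a. H #> a) ` K)"
    proof -
      have "q^e * r = card ((\<lambda>a. H #> a) ` K) * card H" using r(1) lag by metis
      then have "q^e * r = card ((\<lambda>a. H #> a) ` K) * (q^e * s)" using s by metis
      then show ?thesis by (metis mult.commute)
    qed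
    hence "r = s * card ((\<lambda>a. H #> a) ` K)"
      using q by (simp add: mult.assoc)
    hence "q dvd r" using qd by simp
    with r(2) show False by simp
  qed
  then obtain x where x: "x \<in> Q" "x \<notin> H" by blast
  interpret Q': group "G\<lparr>carrier := Q\<rparr>" using QG by (rule subgroup_imp_group)
  have xG: "x \<in> carrier G" using x QG subgroup.subset by blast
  have "x [^]\<^bsub>G\<lparr>carrier := Q\<rparr>\<^esub> order (G\<lparr>carrier := Q\<rparr>) = \<one>\<^bsub>G\<lparr>carrier := Q\<rparr>\<^esub>"
    using Q'.pow_order_eq_1 x(1) by simp
  hence x1: "x [^] (q^e) = \<one>" using Q(2) by (simp add: order_def nat_pow_consistent[symmetric])
  define P where "P = (\<lambda>j. x [^] (q^j) \<in> H)"
  have Pe: "P e" using x1 P_def subgroup.one_closed[OF H] by simp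
  define j where "j = (LEAST j. P j)"
  have Pj: "P j" using LeastI[of P e] Pe j_def by simp
  have j0: "j \<noteq> 0"
  proof
    assume "j = 0" then have "x [^] (1::nat) \<in> H" using Pj by (simp add: P_def)
    then show False using x(2) xG by simp
  qed
  then obtain i where i: "j = Suc i" using not0_implies_Suc by blast
  have Pi: "\<not> P i" using Least_le[of P i] i j_def by fastforce
  have "x [^] (q^i) \<in> K" using x(1) QK xG
    using subgroup_pow_closed[OF K] by blast
  moreover have "(x [^] (q^i)) [^] q \<in> H" using Pj i xG by (simp add: P_def nat_pow_pow mult.commute)
  ultimately show ?thesis using Pi P_def by blast
qed



lemma (in group) bezout_in_subgroup:
  assumes H: "subgroup H G" and x: "x \<in> carrier G" and q: "x [^] (q::nat) \<in> H"
    and n: "x [^] (n::nat) \<in> H" and cop: "coprime q n" and q0: "q \<noteq> 0"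
  shows "x \<in> H"
proof -
  obtain u v where uv: "q * u = n * v + gcd q n" using bezout_nat[OF q0] by blast
  hence uv': "q * u = n * v + 1" using cop by simp
  have "x [^] (q*u) = x [^] (n*v) \<otimes> x [^] (1::nat)"
    using uv' x by (simp add: nat_pow_mult)
  hence "x [^] (q*u) = x [^] (n*v) \<otimes> x" using x by simp
  hence "x = inv (x [^] (n*v)) \<otimes> x [^] (q*u)"
    using x by (simp add: m_assoc[symmetric])
  moreover have "x [^] (q*u) \<in> H" using subgroup_pow_closed[OF H q] x by (simp add: nat_pow_pow)
  moreover have "x [^] (n*v) \<in> H" using subgroup_pow_closed[OF H n] x by (simp add: nat_pow_pow)
  ultimately show ?thesis using H by (metis subgroup.m_closed subgroup.m_inv_closed)
qed

lemma (in group) conj_pow: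
  assumes "g \<in> carrier G" "x \<in> carrier G"
  shows "(g \<otimes> x \<otimes> inv g) [^] (n::nat) = g \<otimes> x [^] n \<otimes> inv g"
proof (induction n)
  case 0 then show ?case using assms by simp
next
  case (Suc n)
  have "(g \<otimes> x \<otimes> inv g) [^] Suc n = (g \<otimes> x [^] n \<otimes> inv g) \<otimes> (g \<otimes> x \<otimes> inv g)"
    using Suc by simp
  also have "\<dots> = g \<otimes> (x [^] n \<otimes> x) \<otimes> inv g"
    using assms by (simp add: m_assoc) (metis inv_closed inv_solve_left' m_closed)
  finally show ?case using assms by simp
qed

lemma (in normal) conj_coset:
  assumes "g \<in> carrier G" "a \<in> carrier G"
  shows "g <# (H #> a) #> inv g = H #> (g \<otimes> a \<otimes> inv g)"
proof -
  have "g <# (H #> a) = (g <# H) #> a" using assms subset by (simp add: coset_assoc)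
  also have "\<dots> = (H #> g) #> a" using coset_eq assms by simp
  finally show ?thesis using assms subset by (simp add: coset_mult_assoc)
qed




lemma (in group) fixed_coset_exists:
  assumes fin: "finite (carrier G)" and B: "B \<lhd> G" and A: "subgroup A G" and BA: "B \<subseteq> A"
    and p: "Factorial_Ring.prime p" and pd: "p dvd card ((\<lambda>a. B #> a) ` A)"
    and Hn: "\<And>x a. x \<in> carrier G \<Longrightarrow> a \<in> A \<Longrightarrow> B #> (x [^] (n::nat) \<otimes> a \<otimes> inv (x [^] n)) = B #> a"
    and cop: "\<And>q. Factorial_Ring.prime q \<Longrightarrow> q \<noteq> p \<Longrightarrow> coprime q n"
    and Ainv: "\<And>g a. g \<in> carrier G \<Longrightarrow> a \<in> A \<Longrightarrow> g \<otimes> a \<otimes> inv g \<in> A"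
  shows "\<exists>a\<in>A. a \<notin> B \<and> (\<forall>g\<in>carrier G. B #> (g \<otimes> a \<otimes> inv g) = B #> a)"
proof (rule ccontr)
  assume nex: "\<not> ?thesis"
  interpret Bn: normal B G using B .
  define E where "E = {H. H \<subseteq> carrier G}"
  define \<phi> where "\<phi> = (\<lambda>g. \<lambda>H\<in>E. g <# H #> inv g)"
  have act: "group_action G E \<phi>"
    using action_by_conjugation_on_power_set unfolding E_def \<phi>_def .
  define Xs where "Xs = (\<lambda>a. B #> a) ` A"
  have AG: "A \<subseteq> carrier G" using A subgroup.subset by blast
  have BE: "\<And>a. a \<in> carrier G \<Longrightarrow> B #> a \<in> E"
    unfolding E_def using r_coset_subset_G Bn.subset by blast
  have phi: "\<And>g a. g \<in> carrier G \<Longrightarrow> a \<in> carrier G \<Longrightarrow> \<phi> g (B #> a) = B #> (g \<otimes> a \<otimes> inv g)"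
    using BE Bn.conj_coset unfolding \<phi>_def by simp
  have orb: "\<And>a. a \<in> carrier G \<Longrightarrow> orbit G \<phi> (B #> a) = (\<lambda>g. B #> (g \<otimes> a \<otimes> inv g)) ` carrier G"
    using phi unfolding orbit_def by auto
  have orbX: "\<And>a. a \<in> A \<Longrightarrow> orbit G \<phi> (B #> a) \<subseteq> Xs"
  proof -
    fix a assume a: "a \<in> A"
    hence "a \<in> carrier G" using AG by blast
    hence "orbit G \<phi> (B #> a) = (\<lambda>g. B #> (g \<otimes> a \<otimes> inv g)) ` carrier G" using orb by blast
    moreover have "(\<lambda>g. B #> (g \<otimes> a \<otimes> inv g)) ` carrier G \<subseteq> Xs"
      using Ainv a unfolding Xs_def by blast
    ultimately show "orbit G \<phi> (B #> a) \<subseteq> Xs" by simp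
  qed
  have XE: "Xs \<subseteq> E" using BE AG unfolding Xs_def by auto
  have finX: "finite Xs" using fin AG finite_subset unfolding Xs_def by blast
  have size: "card (orbit G \<phi> (B #> a)) = 1 \<or> p dvd card (orbit G \<phi> (B #> a))" if a: "a \<in> A" for a
  proof -
    define S where "S = B #> a"
    define St where "St = stabilizer G \<phi> S"
    have aG: "a \<in> carrier G" using a AG by blast
    have SE: "S \<in> E" using BE aG S_def by blast
    have St: "subgroup St G" using group_action.stabilizer_subgroup[OF act SE] St_def by simp
    have os: "card (orbit G \<phi> S) * card St = order G"
      using group_action.orbit_stabilizer_theorem[OF act SE] St_def by simp
    have lag: "card (rcosets St) * card St = order G" using lagrange[OF St] .
    have StG: "St \<subseteq> carrier G" using St subgroup.subset by blast
    have cSt: "card St > 0" using St fin StG finite_subset subgroup.one_closed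
      by (metis card_gt_0_iff empty_iff)
    have co: "card (orbit G \<phi> S) = card ((\<lambda>x. St #> x) ` carrier G)"
      using os lag cSt rcosets_image[of St] by (metis mult_right_cancel not_gr0)
    show ?thesis
    proof (cases "card (orbit G \<phi> S) = 1")
      case True then show ?thesis using S_def by simp
    next
      case False
      then obtain q where q: "Factorial_Ring.prime q" "q dvd card (orbit G \<phi> S)"
        using prime_factor_nat by blast
      show ?thesis
      proof (cases "q = p")
        case True then show ?thesis using q S_def by simp
      next
        case False
        obtain x where x: "x \<in> carrier G" "x \<notin> St" "x [^] q \<in> St"
          using exists_q_elem[OF fin subgroup_self St StG q(1)] q(2) co by auto
        have xn: "x [^] n \<in> St"
        proof -
          have "x [^] n \<in> carrier G" using x by simp
          moreover have "\<phi> (x [^] n) S = S" using phi Hn x(1) a aG S_def by simp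
          ultimately show ?thesis unfolding St_def stabilizer_def by simp
        qed
        have "x \<in> St"
          using bezout_in_subgroup[OF St x(1) x(3) xn cop[OF q(1) False]] q(1) by (simp add: prime_gt_0_nat)
        with x(2) show ?thesis by simp
      qed
    qed
  qed
  define Os where "Os = (\<lambda>S. orbit G \<phi> S) ` Xs"
  have cover: "\<Union>Os = Xs"
  proof
    show "\<Union>Os \<subseteq> Xs" using orbX unfolding Os_def Xs_def by auto
    show "Xs \<subseteq> \<Union>Os" using group_action.orbit_refl[OF act] XE unfolding Os_def by blast
  qed
  have disj: "pairwise disjnt Os"
  proof (rule pairwiseI)
    fix o1 o2 assume ob: "o1 \<in> Os" "o2 \<in> Os" "o1 \<noteq> o2"
    obtain S1 where S1: "S1 \<in> Xs" "o1 = orbit G \<phi> S1" using ob(1) unfolding Os_def by blast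
    obtain S2 where S2: "S2 \<in> Xs" "o2 = orbit G \<phi> S2" using ob(2) unfolding Os_def by blast
    have "o1 \<in> orbits G E \<phi>" using S1 XE unfolding orbits_def by blast
    moreover have "o2 \<in> orbits G E \<phi>" using S2 XE unfolding orbits_def by blast
    ultimately have "o1 \<inter> o2 = {}" using group_action.disjoint_union[OF act, of o1 o2] ob(3) by simp
    then show "disjnt o1 o2" by (simp add: disjnt_def)
  qed
  have finO: "finite Os" using finX Os_def by simp
  have fino: "\<And>ob. ob \<in> Os \<Longrightarrow> finite ob" using cover finX by (meson Union_upper finite_subset)
  have cardX: "card Xs = sum card Os" using card_Union_disjoint[OF disj fino] cover by simp
  have one: "\<one> \<in> A" using A subgroup.one_closed by blast
  have BB: "B #> \<one> = B" using Bn.subset by simp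
  have orbB: "orbit G \<phi> B = {B}"
  proof -
    have "orbit G \<phi> (B #> \<one>) = (\<lambda>g. B #> (g \<otimes> \<one> \<otimes> inv g)) ` carrier G" using orb by simp
    also have "\<dots> = {B}" using BB by auto
    finally show ?thesis using BB by simp
  qed
  have BO: "{B} \<in> Os" using orbB one BB unfolding Os_def Xs_def by (metis image_eqI)
  have rest: "p dvd card ob" if ob: "ob \<in> Os - {{B}}" for ob
  proof -
    obtain a where a: "a \<in> A" "ob = orbit G \<phi> (B #> a)" using ob unfolding Os_def Xs_def by auto
    have aG: "a \<in> carrier G" using a AG by blast
    have Sin: "B #> a \<in> ob" using a group_action.orbit_refl[OF act] BE aG by blast
    show ?thesis
    proof (cases "card ob = 1")
      case False then show ?thesis using size a by blast
    next
      case True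
      then obtain S where "ob = {S}" using card_1_singletonE by blast
      hence oS: "ob = {B #> a}" using Sin by simp
      have fixed: "\<forall>g\<in>carrier G. B #> (g \<otimes> a \<otimes> inv g) = B #> a"
        using oS a(2) orb[OF aG] by auto
      have "a \<notin> B"
      proof
        assume "a \<in> B" hence "B #> a = B" using coset_join2 aG Bn.subgroup_axioms by blast
        with oS ob show False by simp
      qed
      with fixed a(1) nex show ?thesis by blast
    qed
  qed
  have "sum card Os = card {B} + sum card (Os - {{B}})"
    using sum.remove[OF finO BO, of card] by simp
  hence "card Xs = 1 + sum card (Os - {{B}})" using cardX by simp
  moreover have "p dvd sum card (Os - {{B}})" using rest by (intro dvd_sum) blast
  moreover have "p dvd card Xs" using pd Xs_def by simp
  ultimately have "p dvd (1 + sum card (Os - {{B}})) - sum card (Os - {{B}})"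
    by (metis dvd_diff_nat)
  hence "p dvd 1" by simp
  with p show False by simp
qed




lemma (in group) rcos_eq_iff:
  assumes H: "subgroup H G" and x: "x \<in> carrier G" and y: "y \<in> carrier G"
  shows "(H #> x = H #> y) = (x \<otimes> inv y \<in> H)"
proof
  assume "H #> x = H #> y"
  hence "H #> (x \<otimes> inv y) = H" using coset_mult_inv2 x y H subgroup.subset by blast
  thus "x \<otimes> inv y \<in> H" using coset_join1 x y H by blast
next
  assume "x \<otimes> inv y \<in> H"
  hence "H #> (x \<otimes> inv y) = H" using coset_join2 x y H by blast
  thus "H #> x = H #> y" using coset_mult_inv1 x y H subgroup.subset by blast
qed

lemma card_image_eq_rel:
  assumes "\<And>x y. x \<in> A \<Longrightarrow> y \<in> A \<Longrightarrow> (f x = f y) = (g x = g y)"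
  shows "card (f ` A) = card (g ` A)"
proof -
  define h where "h = (\<lambda>S. g (inv_into A f S))"
  have hf: "h (f a) = g a" if "a \<in> A" for a
  proof -
    have "inv_into A f (f a) \<in> A" using that by (simp add: inv_into_into)
    moreover have "f (inv_into A f (f a)) = f a" using that by (simp add: f_inv_into_f)
    ultimately show ?thesis using assms that h_def by blast
  qed
  have "h ` (f ` A) = g ` A" using hf by (auto simp: image_iff)
  moreover have "inj_on h (f ` A)"
    using hf assms by (auto simp: inj_on_def)
  ultimately show ?thesis using card_image by fastforce
qed

lemma (in group) main_result:
  assumes "True" and "finite (carrier G)" and "solvable G"
    and "maximal_subgroup G M"
    and "exponential_subgroup G M"
  shows "M \<lhd> G"
proof -
  have fin: "finite (carrier G)" by fact
  have Mg: "subgroup M G" and MneG: "M \<noteq> carrier G"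
    and maxM: "\<And>H. subgroup H G \<Longrightarrow> M \<subseteq> H \<Longrightarrow> H = M \<or> H = carrier G"
    using assms(4) unfolding maximal_subgroup_def by auto
  define n where "n = card (rcosets M)"
  have expo: "\<And>x. x \<in> carrier G \<Longrightarrow> x [^] n \<in> M"
    using assms(5) unfolding exponential_subgroup_def n_def by auto
  have MG: "M \<subseteq> carrier G" using Mg subgroup.subset by blast
  have expo': "g \<otimes> x [^] n \<otimes> inv g \<in> M" if "x \<in> carrier G" "g \<in> carrier G" for x g
    using expo[of "g \<otimes> x \<otimes> inv g"] conj_pow[OF that(2) that(1)] that by simp
  \<comment> \<open>choose a minimal normal subgroup not contained in M\<close>
  define S where "S = {K. K \<lhd> G \<and> \<not> K \<subseteq> M}"
  have GS: "carrier G \<in> S" using normal_self MneG MG S_def by blast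
  obtain A where A: "A \<in> S" and Amin: "\<And>K. K \<in> S \<Longrightarrow> card A \<le> card K"
    using ex_has_least_nat[of "\<lambda>K. K \<in> S" "carrier G" card] GS by blast
  have An: "A \<lhd> G" and AM: "\<not> A \<subseteq> M" using A S_def by auto
  interpret An: normal A G using An .
  have AG: "A \<subseteq> carrier G" using An.subset .
  have finA: "finite A" using fin AG finite_subset by blast
  have minA: "K = A" if "K \<lhd> G" "K \<subseteq> A" "\<not> K \<subseteq> M" for K
  proof -
    have "card A \<le> card K" using Amin that S_def by blast
    thus ?thesis using card_seteq[OF finA that(2)] by blast
  qed
  \<comment> \<open>derived subgroup of A lies in M\<close>
  have dn: "(derived G ^^ j) A \<lhd> G" for j
    by (induction j) (auto simp: An derived_is_normal)
  have dsub: "(derived G ^^ j) A \<subseteq> A" for j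
  proof (induction j)
    case 0 then show ?case by simp
  next
    case (Suc j) then show ?case using derived_incl[OF _ An.subgroup_axioms] by simp
  qed
  obtain k where k: "(derived G ^^ k) (carrier G) = {\<one>}"
    using assms(3) solvable_iff_trivial_derived_seq by blast
  define P where "P = (\<lambda>j. (derived G ^^ j) A \<subseteq> M)"
  have Pk: "P k" using mono_exp_of_derived[OF AG, of k] k subgroup.one_closed[OF Mg] P_def by auto
  define j where "j = (LEAST j. P j)"
  have Pj: "P j" using LeastI[of P k] Pk j_def by simp
  have j0: "j \<noteq> 0" using Pj AM P_def by auto
  then obtain i where i: "j = Suc i" using not0_implies_Suc by blast
  have Pi: "\<not> P i" using Least_le[of P i] i j_def by fastforce
  have Di: "(derived G ^^ i) A = A" using minA[OF dn dsub] Pi P_def by blast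
  have dA: "derived G A \<subseteq> M" using Pj i Di P_def by simp
  have comm: "a \<otimes> b \<otimes> inv a \<otimes> inv b \<in> M" if "a \<in> A" "b \<in> A" for a b
  proof -
    have "a \<otimes> b \<otimes> inv a \<otimes> inv b \<in> derived G A"
      unfolding derived_def using that by (intro generate.incl) blast
    thus ?thesis using dA by blast
  qed
  interpret SI: second_isomorphism_grp A G M
    using An Mg by (simp add: second_isomorphism_grp_def second_isomorphism_grp_axioms_def)
  have AMsub: "subgroup (A <#> M) G" using SI.normal_set_mult_subgroup .
  have MAM: "M \<subseteq> A <#> M"
  proof
    fix m assume "m \<in> M"
    hence "m = \<one> \<otimes> m" "\<one> \<in> A" using MG An.one_closed by auto
    thus "m \<in> A <#> M" using \<open>m \<in> M\<close> unfolding set_mult_def by blast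
  qed
  obtain a1 where a1: "a1 \<in> A" "a1 \<notin> M" using AM by blast
  have "a1 \<in> A <#> M"
  proof -
    have "a1 = a1 \<otimes> \<one>" using a1 AG by auto
    thus ?thesis using a1(1) subgroup.one_closed[OF Mg] unfolding set_mult_def by blast
  qed
  hence AMG: "A <#> M = carrier G" using maxM[OF AMsub MAM] a1 by blast
  have decomp: "\<exists>a\<in>A. \<exists>m\<in>M. g = a \<otimes> m" if "g \<in> carrier G" for g
  proof -
    have "g \<in> (\<Union>h\<in>A. \<Union>k\<in>M. {h \<otimes> k})" using that AMG unfolding set_mult_def by simp
    thus ?thesis by blast
  qed
  define B where "B = A \<inter> M"
  have Bsub: "subgroup B G" using subgroups_Inter_pair[OF An.subgroup_axioms Mg] B_def by simp
  have BA: "B \<subseteq> A" and BM: "B \<subseteq> M" using B_def by auto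
  have Bconj: "g \<otimes> b \<otimes> inv g \<in> B" if g: "g \<in> carrier G" and b: "b \<in> B" for g b
  proof -
    obtain a m where am: "a \<in> A" "m \<in> M" "g = a \<otimes> m" using decomp[OF g] by blast
    have aG: "a \<in> carrier G" and mG: "m \<in> carrier G" using am AG MG by auto
    have bG: "b \<in> carrier G" using b BA AG by auto
    define c where "c = m \<otimes> b \<otimes> inv m"
    have "b \<in> A" using b BA by blast
    hence cA: "c \<in> A" unfolding c_def by (rule An.inv_op_closed2[OF mG])
    have bM: "b \<in> M" using b BM by blast
    have "m \<otimes> b \<in> M" by (rule subgroup.m_closed[OF Mg am(2) bM])
    moreover have "inv m \<in> M" by (rule subgroup.m_inv_closed[OF Mg am(2)])
    ultimately have cM: "c \<in> M" unfolding c_def by (rule subgroup.m_closed[OF Mg])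
    have cG: "c \<in> carrier G" using cA AG by auto
    have e1: "a \<otimes> c \<otimes> inv a \<in> A" using An.inv_op_closed2[OF aG cA] .
    have "a \<otimes> c \<otimes> inv a \<otimes> inv c \<in> M" using comm[OF am(1) cA] .
    hence "a \<otimes> c \<otimes> inv a \<otimes> inv c \<otimes> c \<in> M" by (rule subgroup.m_closed[OF Mg _ cM])
    moreover have "a \<otimes> c \<otimes> inv a \<otimes> inv c \<otimes> c = a \<otimes> c \<otimes> inv a"
      using aG cG by (simp add: m_assoc)
    ultimately have e2: "a \<otimes> c \<otimes> inv a \<in> M" by simp
    have "g \<otimes> b \<otimes> inv g = a \<otimes> c \<otimes> inv a"
      unfolding am(3) c_def using aG mG bG by (simp add: inv_mult_group m_assoc)
    thus ?thesis using e1 e2 B_def by simp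
  qed
  have Bn: "B \<lhd> G" using Bsub Bconj normal_inv_iff by blast
  interpret Bn: normal B G using Bn .
  have BG: "B \<subseteq> carrier G" using Bsub subgroup.subset by blast
  define Xs where "Xs = (\<lambda>a. B #> a) ` A"
  have rcM: "rcosets M = (\<lambda>a. M #> a) ` A"
  proof
    show "(\<lambda>a. M #> a) ` A \<subseteq> rcosets M" using AG by (auto intro: rcosetsI[OF MG])
    show "rcosets M \<subseteq> (\<lambda>a. M #> a) ` A"
    proof
      fix Y assume "Y \<in> rcosets M"
      then obtain g where g: "g \<in> carrier G" "Y = M #> g" using rcosets_image by auto
      obtain a m where am: "a \<in> A" "m \<in> M" "inv g = a \<otimes> m" using decomp[of "inv g"] g by auto
      have aG: "a \<in> carrier G" and mG: "m \<in> carrier G" using am AG MG by auto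
      have "g = inv m \<otimes> inv a" using am(3) g aG mG by (metis inv_inv inv_mult_group)
      hence "g \<otimes> inv (inv a) = inv m" using aG mG by (simp add: m_assoc)
      moreover have "inv m \<in> M" by (rule subgroup.m_inv_closed[OF Mg am(2)])
      ultimately have "M #> g = M #> inv a" using rcos_eq_iff[OF Mg g(1)] aG by simp
      moreover have "inv a \<in> A" by (rule An.m_inv_closed[OF am(1)])
      ultimately show "Y \<in> (\<lambda>a. M #> a) ` A" using g(2) by blast
    qed
  qed
  have nX: "n = card Xs"
    unfolding n_def rcM Xs_def
  proof (rule card_image_eq_rel)
    fix x y assume xy: "x \<in> A" "y \<in> A"
    hence xyG: "x \<in> carrier G" "y \<in> carrier G" using AG by auto
    have "x \<otimes> inv y \<in> A" using xy by (simp add: An.m_closed An.m_inv_closed)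
    hence "(x \<otimes> inv y \<in> M) = (x \<otimes> inv y \<in> B)" using B_def by auto
    thus "(M #> x = M #> y) = (B #> x = B #> y)"
      using rcos_eq_iff[OF Mg xyG] rcos_eq_iff[OF Bsub xyG] by simp
  qed
  have n1: "n \<noteq> 1"
  proof
    assume "n = 1"
    hence "card M = card (carrier G)" using lagrange[OF Mg] n_def by (simp add: order_def)
    hence "M = carrier G" using card_seteq[OF fin MG] by simp
    with MneG show False by simp
  qed
  obtain p where p: "Factorial_Ring.prime p" "p dvd n" using prime_factor_nat[OF n1] by blast
  have pX: "p dvd card Xs" using p nX by simp
  have hom: "(\<lambda>x. B #> x) \<in> hom G (G Mod B)" using Bn.r_coset_hom_Mod .
  interpret Q: group "G Mod B" using Bn.factorgroup_is_group .
  interpret hq: group_hom G "G Mod B" "(\<lambda>x. B #> x)"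
    using hom by (simp add: group_hom_def group_hom_axioms_def is_group Q.is_group)
  have hone: "(B #> x = B) = (x \<in> B)" if "x \<in> carrier G" for x
  proof
    assume "B #> x = B" thus "x \<in> B" by (rule coset_join1[OF _ that Bsub])
  next
    assume "x \<in> B" thus "B #> x = B" by (rule coset_join2[OF that Bsub])
  qed
  have Qone: "\<one>\<^bsub>G Mod B\<^esub> = B" by simp
  \<comment> \<open>elements of A have p-th power in B\<close>
  define Kp where "Kp = {a \<in> A. a [^] p \<in> B}"
  have Kpsub: "subgroup Kp G"
  proof (rule subgroupI)
    show "Kp \<subseteq> carrier G" using AG Kp_def by auto
    have "\<one> \<in> Kp" unfolding Kp_def using An.one_closed Bn.one_closed by simp
    thus "Kp \<noteq> {}" by blast
  next
    fix a assume a: "a \<in> Kp"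
    hence aA: "a \<in> A" and ap: "a [^] p \<in> B" using Kp_def by auto
    have aG: "a \<in> carrier G" using aA AG by auto
    have "inv (a [^] p) \<in> B" by (rule Bn.m_inv_closed[OF ap])
    hence "(inv a) [^] p \<in> B" using nat_pow_inv[OF aG] by simp
    moreover have "inv a \<in> A" by (rule An.m_inv_closed[OF aA])
    ultimately show "inv a \<in> Kp" using Kp_def by simp
  next
    fix a b assume a: "a \<in> Kp" and b: "b \<in> Kp"
    hence aA: "a \<in> A" and ap: "a [^] p \<in> B" and bA: "b \<in> A" and bp: "b [^] p \<in> B"
      using Kp_def by auto
    have aG: "a \<in> carrier G" and bG: "b \<in> carrier G" using aA bA AG by auto
    have abA: "a \<otimes> b \<in> A" by (rule An.m_closed[OF aA bA])
    have "a \<otimes> b \<otimes> inv a \<otimes> inv b \<in> A"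
      using aA bA by (simp add: An.m_closed An.m_inv_closed)
    moreover have "a \<otimes> b \<otimes> inv a \<otimes> inv b \<in> M" by (rule comm[OF aA bA])
    ultimately have "a \<otimes> b \<otimes> inv a \<otimes> inv b \<in> B" using B_def by simp
    moreover have "(a \<otimes> b) \<otimes> inv (b \<otimes> a) = a \<otimes> b \<otimes> inv a \<otimes> inv b"
      using aG bG by (simp add: inv_mult_group m_assoc)
    ultimately have "(a \<otimes> b) \<otimes> inv (b \<otimes> a) \<in> B" by simp
    hence "B #> (a \<otimes> b) = B #> (b \<otimes> a)"
      by (rule iffD2[OF rcos_eq_iff[OF Bsub m_closed[OF aG bG] m_closed[OF bG aG]]])
    hence cm: "(B #> a) \<otimes>\<^bsub>G Mod B\<^esub> (B #> b) = (B #> b) \<otimes>\<^bsub>G Mod B\<^esub> (B #> a)"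
      using hq.hom_mult aG bG by metis
    have haQ: "B #> a \<in> carrier (G Mod B)" using hq.hom_closed[OF aG] .
    have hbQ: "B #> b \<in> carrier (G Mod B)" using hq.hom_closed[OF bG] .
    have "B #> ((a \<otimes> b) [^] p) = (B #> (a \<otimes> b)) [^]\<^bsub>G Mod B\<^esub> p"
      using hq.hom_nat_pow aG bG by simp
    also have "\<dots> = ((B #> a) \<otimes>\<^bsub>G Mod B\<^esub> (B #> b)) [^]\<^bsub>G Mod B\<^esub> p"
      using hq.hom_mult aG bG by metis
    also have "\<dots> = (B #> a) [^]\<^bsub>G Mod B\<^esub> p \<otimes>\<^bsub>G Mod B\<^esub> (B #> b) [^]\<^bsub>G Mod B\<^esub> p"
      by (rule Q.pow_mult_distrib[OF cm haQ hbQ])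
    also have "\<dots> = (B #> (a [^] p)) \<otimes>\<^bsub>G Mod B\<^esub> (B #> (b [^] p))"
      using hq.hom_nat_pow aG bG by simp
    also have "\<dots> = \<one>\<^bsub>G Mod B\<^esub> \<otimes>\<^bsub>G Mod B\<^esub> \<one>\<^bsub>G Mod B\<^esub>"
    proof -
      have e1: "B #> (a [^] p) = \<one>\<^bsub>G Mod B\<^esub>" using hone[of "a [^] p"] ap aG by simp
      have e2: "B #> (b [^] p) = \<one>\<^bsub>G Mod B\<^esub>" using hone[of "b [^] p"] bp bG by simp
      show ?thesis by (simp only: e1 e2)
    qed
    also have "\<dots> = B" using Q.l_one Q.one_closed Qone by metis
    finally have "(a \<otimes> b) [^] p \<in> B" using hone aG bG by simp
    thus "a \<otimes> b \<in> Kp" using abA Kp_def by simp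
  qed
  have Kpn: "Kp \<lhd> G"
  proof -
    have "g \<otimes> a \<otimes> inv g \<in> Kp" if g: "g \<in> carrier G" and a: "a \<in> Kp" for g a
    proof -
      have aA: "a \<in> A" and ap: "a [^] p \<in> B" using a Kp_def by auto
      have aG: "a \<in> carrier G" using aA AG by auto
      have "g \<otimes> a \<otimes> inv g \<in> A" by (rule An.inv_op_closed2[OF g aA])
      moreover have "(g \<otimes> a \<otimes> inv g) [^] p \<in> B"
        using conj_pow[OF g aG] Bconj[OF g ap] by simp
      ultimately show ?thesis using Kp_def by simp
    qed
    thus ?thesis using normal_inv_iff Kpsub by blast
  qed
  obtain a2 where a2: "a2 \<in> A" "a2 \<notin> B" "a2 [^] p \<in> B"
    using exists_q_elem[OF fin An.subgroup_axioms Bsub BA p(1)] pX Xs_def by blast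
  have "\<not> Kp \<subseteq> M" using a2 Kp_def B_def by auto
  hence KpA: "Kp = A" using minA[OF Kpn] Kp_def by blast
  have allp: "a [^] p \<in> B" if "a \<in> A" for a using KpA that Kp_def by blast
  have onlyp: "q = p" if q: "Factorial_Ring.prime q" "q dvd n" for q
  proof (rule ccontr)
    assume qp: "q \<noteq> p"
    obtain a where a: "a \<in> A" "a \<notin> B" "a [^] q \<in> B"
      using exists_q_elem[OF fin An.subgroup_axioms Bsub BA q(1)] q(2) nX Xs_def by blast
    have "coprime q p" using primes_coprime q(1) p(1) qp by blast
    moreover have "q \<noteq> 0" using q(1) by auto
    moreover have "a \<in> carrier G" using a AG by auto
    ultimately have "a \<in> B" using bezout_in_subgroup[OF Bsub _ a(3) allp[OF a(1)]] by blast
    with a show False by simp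
  qed
  have cop: "coprime q n" if "Factorial_Ring.prime q" "q \<noteq> p" for q
    using prime_imp_coprime[OF that(1)] onlyp that by blast
  have Hn: "B #> (x [^] n \<otimes> a \<otimes> inv (x [^] n)) = B #> a" if x: "x \<in> carrier G" and a: "a \<in> A" for x a
  proof -
    define y where "y = x [^] n"
    have yG: "y \<in> carrier G" using x y_def by simp
    have yM: "y \<in> M" using expo[OF x] y_def by simp
    have aG: "a \<in> carrier G" using a AG by auto
    have "y \<otimes> a \<otimes> inv y \<in> A" by (rule An.inv_op_closed2[OF yG a])
    hence e1: "y \<otimes> a \<otimes> inv y \<otimes> inv a \<in> A" using a by (simp add: An.m_closed An.m_inv_closed)
    have "a \<otimes> y \<otimes> inv a \<in> M" using expo'[OF x aG] y_def by simp
    hence "inv (a \<otimes> y \<otimes> inv a) \<in> M" by (rule subgroup.m_inv_closed[OF Mg])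
    moreover have "inv (a \<otimes> y \<otimes> inv a) = a \<otimes> inv y \<otimes> inv a"
      using aG yG by (simp add: inv_mult_group m_assoc)
    ultimately have "a \<otimes> inv y \<otimes> inv a \<in> M" by simp
    hence "y \<otimes> (a \<otimes> inv y \<otimes> inv a) \<in> M" by (rule subgroup.m_closed[OF Mg yM])
    hence e2: "y \<otimes> a \<otimes> inv y \<otimes> inv a \<in> M" using aG yG by (simp add: m_assoc)
    have yay: "y \<otimes> a \<otimes> inv y \<in> carrier G" using aG yG by simp
    have "y \<otimes> a \<otimes> inv y \<otimes> inv a \<in> B" using e1 e2 B_def by simp
    hence "B #> (y \<otimes> a \<otimes> inv y) = B #> a"
      by (rule iffD2[OF rcos_eq_iff[OF Bsub yay aG]])
    thus ?thesis using y_def by simp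
  qed
  have Ainv: "g \<otimes> a \<otimes> inv g \<in> A" if "g \<in> carrier G" "a \<in> A" for g a
    by (rule An.inv_op_closed2[OF that])
  obtain a0 where a0: "a0 \<in> A" "a0 \<notin> B" "\<forall>g\<in>carrier G. B #> (g \<otimes> a0 \<otimes> inv g) = B #> a0"
    using fixed_coset_exists[OF fin Bn An.subgroup_axioms BA p(1) pX[unfolded Xs_def] Hn cop Ainv] by blast
  define C where "C = {a \<in> A. \<forall>g\<in>carrier G. B #> (g \<otimes> a \<otimes> inv g) = B #> a}"
  have Csub: "subgroup C G"
  proof (rule subgroupI)
    show "C \<subseteq> carrier G" using AG C_def by auto
    have "\<one> \<in> C" unfolding C_def using An.one_closed by simp
    thus "C \<noteq> {}" by blast
  next
    fix a assume a: "a \<in> C"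
    hence aA: "a \<in> A" and af: "\<And>g. g \<in> carrier G \<Longrightarrow> B #> (g \<otimes> a \<otimes> inv g) = B #> a"
      using C_def by auto
    have aG: "a \<in> carrier G" using aA AG by auto
    have "B #> (g \<otimes> inv a \<otimes> inv g) = B #> inv a" if g: "g \<in> carrier G" for g
    proof -
      have "g \<otimes> inv a \<otimes> inv g = inv (g \<otimes> a \<otimes> inv g)"
        using aG g by (simp add: inv_mult_group m_assoc)
      hence "B #> (g \<otimes> inv a \<otimes> inv g) = inv\<^bsub>G Mod B\<^esub> (B #> (g \<otimes> a \<otimes> inv g))"
        using hq.hom_inv aG g by simp
      also have "\<dots> = inv\<^bsub>G Mod B\<^esub> (B #> a)" using af[OF g] by simp
      also have "\<dots> = B #> inv a" using hq.hom_inv aG by simp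
      finally show ?thesis .
    qed
    moreover have "inv a \<in> A" by (rule An.m_inv_closed[OF aA])
    ultimately show "inv a \<in> C" using C_def by simp
  next
    fix a b assume a: "a \<in> C" and b: "b \<in> C"
    hence aA: "a \<in> A" and af: "\<And>g. g \<in> carrier G \<Longrightarrow> B #> (g \<otimes> a \<otimes> inv g) = B #> a"
      and bA: "b \<in> A" and bf: "\<And>g. g \<in> carrier G \<Longrightarrow> B #> (g \<otimes> b \<otimes> inv g) = B #> b"
      unfolding C_def by blast+
    have aG: "a \<in> carrier G" and bG: "b \<in> carrier G" using aA bA AG by auto
    have "B #> (g \<otimes> (a \<otimes> b) \<otimes> inv g) = B #> (a \<otimes> b)" if g: "g \<in> carrier G" for g
    proof -
      have "g \<otimes> (a \<otimes> b) \<otimes> inv g = (g \<otimes> a \<otimes> inv g) \<otimes> (g \<otimes> b \<otimes> inv g)"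
        using aG bG g by (simp add: m_assoc) (metis inv_closed inv_solve_left' m_closed)
      hence "B #> (g \<otimes> (a \<otimes> b) \<otimes> inv g) =
             (B #> (g \<otimes> a \<otimes> inv g)) \<otimes>\<^bsub>G Mod B\<^esub> (B #> (g \<otimes> b \<otimes> inv g))"
        using hq.hom_mult aG bG g by simp
      also have "\<dots> = (B #> a) \<otimes>\<^bsub>G Mod B\<^esub> (B #> b)" using af[OF g] bf[OF g] by simp
      also have "\<dots> = B #> (a \<otimes> b)" using hq.hom_mult aG bG by simp
      finally show ?thesis .
    qed
    moreover have "a \<otimes> b \<in> A" by (rule An.m_closed[OF aA bA])
    ultimately show "a \<otimes> b \<in> C" using C_def by simp
  qed
  have Cn: "C \<lhd> G"
  proof -
    have "k \<otimes> a \<otimes> inv k \<in> C" if k: "k \<in> carrier G" and a: "a \<in> C" for k a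
    proof -
      have aA: "a \<in> A" and af: "\<And>g. g \<in> carrier G \<Longrightarrow> B #> (g \<otimes> a \<otimes> inv g) = B #> a"
        using a C_def by auto
      have aG: "a \<in> carrier G" using aA AG by auto
      have "B #> (g \<otimes> (k \<otimes> a \<otimes> inv k) \<otimes> inv g) = B #> (k \<otimes> a \<otimes> inv k)" if g: "g \<in> carrier G" for g
      proof -
        have "g \<otimes> (k \<otimes> a \<otimes> inv k) \<otimes> inv g = (g \<otimes> k) \<otimes> a \<otimes> inv (g \<otimes> k)"
          using aG g k by (simp add: m_assoc inv_mult_group)
        hence "B #> (g \<otimes> (k \<otimes> a \<otimes> inv k) \<otimes> inv g) = B #> a"
          using af[of "g \<otimes> k"] g k by simp
        thus ?thesis using af[OF k] by simp
      qed
      moreover have "k \<otimes> a \<otimes> inv k \<in> A" by (rule An.inv_op_closed2[OF k aA])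
      ultimately show ?thesis using C_def by simp
    qed
    thus ?thesis using normal_inv_iff Csub by blast
  qed
  have "a0 \<in> C" using a0 C_def by simp
  moreover have "a0 \<notin> M" using a0 B_def by simp
  ultimately have "\<not> C \<subseteq> M" by blast
  hence CA: "C = A" using minA[OF Cn] C_def by blast
  have "g \<otimes> m \<otimes> inv g \<in> M" if g: "g \<in> carrier G" and m: "m \<in> M" for g m
  proof -
    obtain a m1 where am: "a \<in> A" "m1 \<in> M" "g = a \<otimes> m1" using decomp[OF g] by blast
    have aG: "a \<in> carrier G" and m1G: "m1 \<in> carrier G" and mG: "m \<in> carrier G"
      using am m AG MG by auto
    define m2 where "m2 = m1 \<otimes> m \<otimes> inv m1"
    have "m1 \<otimes> m \<in> M" by (rule subgroup.m_closed[OF Mg am(2) m])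
    moreover have "inv m1 \<in> M" by (rule subgroup.m_inv_closed[OF Mg am(2)])
    ultimately have m2M: "m2 \<in> M" unfolding m2_def by (rule subgroup.m_closed[OF Mg])
    have m2G: "m2 \<in> carrier G" using m2M MG by auto
    have "a \<in> C" using CA am(1) by simp
    hence "\<forall>g\<in>carrier G. B #> (g \<otimes> a \<otimes> inv g) = B #> a" unfolding C_def by blast
    hence "B #> (inv m2 \<otimes> a \<otimes> inv (inv m2)) = B #> a" using inv_closed[OF m2G] by blast
    moreover have "inv m2 \<otimes> a \<otimes> inv (inv m2) \<in> carrier G" using aG m2G by simp
    ultimately have "(inv m2 \<otimes> a \<otimes> inv (inv m2)) \<otimes> inv a \<in> B"
      using rcos_eq_iff[OF Bsub _ aG] by blast
    hence wM: "inv m2 \<otimes> a \<otimes> m2 \<otimes> inv a \<in> M" using B_def m2G by simp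
    have "m2 \<otimes> (inv m2 \<otimes> a \<otimes> m2 \<otimes> inv a) \<in> M" by (rule subgroup.m_closed[OF Mg m2M wM])
    moreover have "m2 \<otimes> (inv m2 \<otimes> a \<otimes> m2 \<otimes> inv a) = g \<otimes> m \<otimes> inv g"
    proof -
      have W: "a \<otimes> m2 \<otimes> inv a \<in> carrier G" using aG m2G by simp
      have "inv m2 \<otimes> a \<otimes> m2 \<otimes> inv a = inv m2 \<otimes> (a \<otimes> m2 \<otimes> inv a)"
        using aG m2G by (simp add: m_assoc)
      hence "m2 \<otimes> (inv m2 \<otimes> a \<otimes> m2 \<otimes> inv a) = a \<otimes> m2 \<otimes> inv a"
        using W m2G by (metis m_assoc r_inv l_one inv_closed)
      moreover have "g \<otimes> m \<otimes> inv g = a \<otimes> m2 \<otimes> inv a"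
        unfolding m2_def am(3) using aG m1G mG by (simp add: m_assoc inv_mult_group)
      ultimately show ?thesis by simp
    qed
    ultimately show ?thesis by simp
  qed
  thus "M \<lhd> G" using normal_inv_iff Mg by blast
qed

theorem corollary4p5:
  fixes G :: "('a, 'b) monoid_scheme" and M :: "'a set"
  assumes "group G" and "finite (carrier G)" and "solvable G"
    and "maximal_subgroup G M"
    and "exponential_subgroup G M"
  shows "M \<lhd> G"
  by (rule group.main_result[OF assms(1) TrueI assms(2) assms(3) assms(4) assms(5)])

end
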